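(* Let $\langle V, Q\rangle$ be a Federated Byzantine Agreement System with quorum slice cardinality map $C$. For each $v\in V$ let $\bar q_v=\bigcup_{q\in Q(v)} q$. Define functions $F_i : V\to\mathbb{N}$ for $i\geq 0$ by $F_0(v)=C(v)$ and, for $i\ge 0$, letting $S_i^{v}$ be the sequence of values $(F_i(v') : v'\in \bar q_v)$ sorted in ascending order (one entry per node of $\bar q_v$) and $S_i^v[C(v)]$ its $C(v)$-th element (1-indexed), $$F_{i+1}(v)=\max\{S_i^v[C(v)],\ F_i(v)\}.$$ Then for every $i\geq 0$, every $v\in V$ and every quorum $U$ with $v\in U$, we have $F_i(v)\leq |U|$.
   Context: An FBAS is a pair $\langle V, Q\rangle$ where $V$ is a finite set of nodes and $Q : V \to 2^{2^V}\setminus\{\varnothing\}$ assigns to each node a nonempty collection of subsets of $V$ (its quorum slices), such that for all $v\in V$ and all $q\in Q(v)$, $v \in q$. A set $U \subseteq V$ is a quorum iff $U\neq\varnothing$ and for every $u\in U$ there exists $q \in Q(u)$ with $q\subseteq U$. The quorum slice cardinality map is $C(v)=\min\{|q| : q\in Q(v)\}$. *)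

theory Defs
  imports Main "HOL-Library.Multiset"
begin

definition fbas :: "'a set \<Rightarrow> ('a \<Rightarrow> 'a set set) \<Rightarrow> bool" where
  "fbas V Q \<longleftrightarrow> finite V \<and>
     (\<forall>v\<in>V. Q v \<noteq> {} \<and> (\<forall>q\<in>Q v. q \<subseteq> V \<and> v \<in> q))"

definition quorum :: "'a set \<Rightarrow> ('a \<Rightarrow> 'a set set) \<Rightarrow> 'a set \<Rightarrow> bool" where
  "quorum V Q U \<longleftrightarrow> U \<subseteq> V \<and> U \<noteq> {} \<and> (\<forall>u\<in>U. \<exists>q\<in>Q u. q \<subseteq> U)"

definition slice_card :: "('a \<Rightarrow> 'a set set) \<Rightarrow> 'a \<Rightarrow> nat" where
  "slice_card Q v = Min (card ` Q v)"

definition qbar :: "('a \<Rightarrow> 'a set set) \<Rightarrow> 'a \<Rightarrow> 'a set" where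
  "qbar Q v = \<Union> (Q v)"

definition sorted_vals :: "('a \<Rightarrow> nat) \<Rightarrow> ('a \<Rightarrow> 'a set set) \<Rightarrow> 'a \<Rightarrow> nat list" where
  "sorted_vals F Q v = sorted_list_of_multiset (image_mset F (mset_set (qbar Q v)))"

text \<open>F_0 = C; F_{i+1}(v) = max (S_i^v[C(v)]) (F_i v), with 1-indexed access.\<close>
primrec Fseq :: "('a \<Rightarrow> 'a set set) \<Rightarrow> nat \<Rightarrow> 'a \<Rightarrow> nat" where
  "Fseq Q 0 = slice_card Q"
| "Fseq Q (Suc i) = (\<lambda>v. max (sorted_vals (Fseq Q i) Q v ! (slice_card Q v - 1)) (Fseq Q i v))"

end

theory Submission
  imports Defs
begin

lemma sorted_nth_le:
  fixes xs :: "nat list"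
  assumes s: "sorted xs" and k: "1 \<le> k" "k \<le> length xs"
    and c: "k \<le> length (filter (\<lambda>x. x \<le> b) xs)"
  shows "xs ! (k - 1) \<le> b"
proof (rule ccontr)
  assume "\<not> xs ! (k - 1) \<le> b"
  have gt: "\<forall>x\<in>set (drop (k - 1) xs). x > b"
  proof
    fix x assume "x \<in> set (drop (k - 1) xs)"
    then obtain j where j: "j < length xs - (k-1)" "x = xs ! (k - 1 + j)"
      using k by (auto simp: in_set_conv_nth)
    have "xs ! (k-1) \<le> xs ! (k - 1 + j)" using s j k by (intro sorted_nth_mono) auto
    thus "x > b" using j \<open>\<not> xs ! (k - 1) \<le> b\<close> by simp
  qed
  have "filter (\<lambda>x. x \<le> b) xs = filter (\<lambda>x. x \<le> b) (take (k-1) xs) @ filter (\<lambda>x. x \<le> b) (drop (k-1) xs)"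
    by (metis append_take_drop_id filter_append)
  also have "filter (\<lambda>x. x \<le> b) (drop (k-1) xs) = []" using gt by (auto simp: filter_empty_conv)
  finally have "length (filter (\<lambda>x. x \<le> b) xs) = length (filter (\<lambda>x. x \<le> b) (take (k-1) xs))"
    by simp
  also have "\<dots> \<le> length (take (k-1) xs)" by (rule length_filter_le)
  also have "\<dots> \<le> k - 1" by simp
  finally have "length (filter (\<lambda>x. x \<le> b) xs) \<le> k - 1" .
  thus False using c k by simp
qed

theorem mainTheorem3:
  assumes "fbas V Q"
    and "quorum V Q U"
    and "v \<in> U"
  shows "Fseq Q i v \<le> card U"
  using assms(3)
proof (induction i arbitrary: v)
  case 0
  from assms(1) have finV: "finite V" by (simp add: fbas_def)
  from assms(2) have UV: "U \<subseteq> V" by (simp add: quorum_def)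
  from assms(2) 0 obtain q where q: "q \<in> Q v" "q \<subseteq> U" unfolding quorum_def by blast
  have "finite (Q v)" using finV assms(1) 0 UV unfolding fbas_def
    by (meson finite_Pow_iff finite_subset PowI subsetI subsetD)
  hence "slice_card Q v \<le> card q" unfolding slice_card_def using q by simp
  also have "\<dots> \<le> card U" using q UV finV by (meson card_mono finite_subset)
  finally show ?case by simp
next
  case (Suc i)
  from assms(1) have finV: "finite V" by (simp add: fbas_def)
  from assms(2) have UV: "U \<subseteq> V" by (simp add: quorum_def)
  have vV: "v \<in> V" using UV Suc.prems by auto
  from assms(2) Suc.prems obtain q where q: "q \<in> Q v" "q \<subseteq> U" unfolding quorum_def by blast
  have QvV: "\<forall>q\<in>Q v. q \<subseteq> V \<and> v \<in> q" using assms(1) vV by (simp add: fbas_def)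
  have finQ: "finite (Q v)" using finV QvV
    by (meson finite_Pow_iff finite_subset PowI subsetI)
  have qbV: "qbar Q v \<subseteq> V" using QvV by (auto simp: qbar_def)
  have finqb: "finite (qbar Q v)" using qbV finV finite_subset by blast
  have qqb: "q \<subseteq> qbar Q v" using q by (auto simp: qbar_def)
  have finq: "finite q" using qqb finqb finite_subset by blast
  define C where "C = slice_card Q v"
  have Cq: "C \<le> card q" unfolding C_def slice_card_def using q finQ by simp
  have C1: "1 \<le> C"
  proof -
    have "C \<in> card ` Q v" unfolding C_def slice_card_def using finQ q by (intro Min_in) auto
    then obtain q' where "q' \<in> Q v" "C = card q'" by auto
    moreover have "finite q'" using QvV \<open>q' \<in> Q v\<close> finV finite_subset by blast
    ultimately show ?thesis using QvV by (metis One_nat_def Suc_leI card_gt_0_iff empty_iff)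
  qed
  define M where "M = image_mset (Fseq Q i) (mset_set (qbar Q v))"
  define xs where "xs = sorted_list_of_multiset M"
  have xs_s: "sorted xs" unfolding xs_def by simp
  have mxs: "mset xs = M" unfolding xs_def by simp
  have lenxs: "length xs = card (qbar Q v)" using mxs unfolding M_def
    by (metis size_image_mset size_mset size_mset_set)
  have sub: "image_mset (Fseq Q i) (mset_set q) \<subseteq># M"
    unfolding M_def by (intro image_mset_subseteq_mono) (simp add: finqb qqb msubset_mset_set_iff finq)
  have allle: "\<forall>x\<in>#image_mset (Fseq Q i) (mset_set q). x \<le> card U"
    using Suc.IH q finq by auto
  have "image_mset (Fseq Q i) (mset_set q) \<subseteq># filter_mset (\<lambda>x. x \<le> card U) M"
  proof -
    have "filter_mset (\<lambda>x. x \<le> card U) (image_mset (Fseq Q i) (mset_set q)) = image_mset (Fseq Q i) (mset_set q)"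
      using allle by (simp add: filter_mset_eq_conv)
    thus ?thesis using multiset_filter_mono[OF sub, of "\<lambda>x. x \<le> card U"] by simp
  qed
  hence "size (image_mset (Fseq Q i) (mset_set q)) \<le> size (filter_mset (\<lambda>x. x \<le> card U) M)"
    by (rule size_mset_mono)
  hence "card q \<le> length (filter (\<lambda>x. x \<le> card U) xs)"
    by (metis mxs mset_filter size_image_mset size_mset size_mset_set)
  hence c: "C \<le> length (filter (\<lambda>x. x \<le> card U) xs)" using Cq by simp
  have "C \<le> length xs" using Cq lenxs card_mono[OF finqb qqb] by simp
  hence "xs ! (C - 1) \<le> card U" using sorted_nth_le[OF xs_s C1 _ c] by simp
  moreover have "Fseq Q i v \<le> card U" using Suc.IH Suc.prems by simp
  ultimately show ?case by (simp add: C_def xs_def M_def sorted_vals_def)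
qed

end
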